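(* An $\aleph$-space $X$ is metrizable if and only if $X$ is a Fréchet–Urysohn space having property $(\alpha_4)$.
   Context: A $k$-network in $X$ is a family $\mathcal N$ of subsets such that whenever $K\subset U$ with $K$ compact and $U$ open, there is a finite $\mathcal F\subset\mathcal N$ with $K\subset\bigcup\mathcal F\subset U$; an $\aleph$-space is a regular space with a $\sigma$-locally finite $k$-network. $X$ has property $(\alpha_4)$ at $x\in X$ if for any family $\{x_{m,n}:(m,n)\in\mathbb N\times\mathbb N\}\subset X$ with $\lim_n x_{m,n}=x$ for every $m$, there exist a sequence $(m_k)_k$ of distinct natural numbers and a sequence $(n_k)_k$ of natural numbers with $\lim_k x_{m_k,n_k}=x$; $X$ has property $(\alpha_4)$ if it has it at every point. *)

theory Defs
  imports "HOL-Analysis.Analysis"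
begin

definition k_network :: "'a topology \<Rightarrow> 'a set set \<Rightarrow> bool" where
  "k_network X \<N> \<longleftrightarrow>
     (\<forall>N\<in>\<N>. N \<subseteq> topspace X) \<and>
     (\<forall>K U. compactin X K \<and> openin X U \<and> K \<subseteq> U \<longrightarrow>
        (\<exists>\<F>. finite \<F> \<and> \<F> \<subseteq> \<N> \<and> K \<subseteq> \<Union>\<F> \<and> \<Union>\<F> \<subseteq> U))"

definition sigma_locally_finite :: "'a topology \<Rightarrow> 'a set set \<Rightarrow> bool" where
  "sigma_locally_finite X \<N> \<longleftrightarrow>
     (\<exists>\<A> :: nat \<Rightarrow> 'a set set. \<N> = (\<Union>n. \<A> n) \<and> (\<forall>n. locally_finite_in X (\<A> n)))"

text \<open>Regular is taken in the usual sense including T1 (T3).\<close>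
definition aleph_space :: "'a topology \<Rightarrow> bool" where
  "aleph_space X \<longleftrightarrow> regular_space X \<and> t1_space X \<and>
     (\<exists>\<N>. k_network X \<N> \<and> sigma_locally_finite X \<N>)"

definition frechet_urysohn :: "'a topology \<Rightarrow> bool" where
  "frechet_urysohn X \<longleftrightarrow>
     (\<forall>A x. A \<subseteq> topspace X \<and> x \<in> X closure_of A \<longrightarrow>
        (\<exists>s :: nat \<Rightarrow> 'a. range s \<subseteq> A \<and> limitin X s x sequentially))"

definition alpha4_at :: "'a topology \<Rightarrow> 'a \<Rightarrow> bool" where
  "alpha4_at X x \<longleftrightarrow>
     (\<forall>xs :: nat \<Rightarrow> nat \<Rightarrow> 'a.
        (\<forall>m n. xs m n \<in> topspace X) \<and> (\<forall>m. limitin X (xs m) x sequentially) \<longrightarrow>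
        (\<exists>mk nk :: nat \<Rightarrow> nat. inj mk \<and> limitin X (\<lambda>k. xs (mk k) (nk k)) x sequentially))"

definition alpha4 :: "'a topology \<Rightarrow> bool" where
  "alpha4 X \<longleftrightarrow> (\<forall>x\<in>topspace X. alpha4_at X x)"

end

theory Submission
  imports Defs
begin

lemma metrizable_frechet:
  assumes "metrizable_space X" shows "frechet_urysohn X"
proof -
  obtain M d where md: "Metric_space M d" and X: "X = Metric_space.mtopology M d"
    using assms unfolding metrizable_space_def by blast
  interpret Metric_space M d by (rule md)
  show ?thesis
    unfolding frechet_urysohn_def X
  proof (intro allI impI)
    fix A x assume h: "A \<subseteq> topspace mtopology \<and> x \<in> mtopology closure_of A"
    then obtain s where "range s \<subseteq> A \<inter> M" "limitin mtopology s x sequentially"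
      using closure_of_sequentially by auto
    then show "\<exists>s. range s \<subseteq> A \<and> limitin mtopology s x sequentially" by blast
  qed
qed

lemma metrizable_alpha4:
  assumes "metrizable_space X" shows "alpha4 X"
proof -
  obtain M d where md: "Metric_space M d" and X: "X = Metric_space.mtopology M d"
    using assms unfolding metrizable_space_def by blast
  interpret Metric_space M d by (rule md)
  show ?thesis
    unfolding alpha4_def alpha4_at_def X
  proof (intro ballI allI impI)
    fix x and xs :: "nat \<Rightarrow> nat \<Rightarrow> 'a" assume x: "x \<in> topspace mtopology"
      and h: "(\<forall>m n. xs m n \<in> topspace mtopology) \<and> (\<forall>m. limitin mtopology (xs m) x sequentially)"
    have "\<exists>n. d (xs m n) x < 1 / (Suc m)" for m :: nat
    proof -
      have "\<forall>\<^sub>F n in sequentially. xs m n \<in> M \<and> d (xs m n) x < 1 / (Suc m)"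
      proof -
        have pos: "(0::real) < 1 / Suc m" by simp
        show ?thesis using h pos unfolding limitin_metric by blast
      qed
      then obtain N where "\<forall>n\<ge>N. xs m n \<in> M \<and> d (xs m n) x < 1 / (Suc m)"
        unfolding eventually_sequentially by blast
      then show ?thesis by blast
    qed
    then obtain nk where nk: "\<And>m. d (xs m (nk m)) x < 1 / (Suc m)" by metis
    have "limitin mtopology (\<lambda>k. xs (id k) (nk k)) x sequentially"
      unfolding limitin_metric
    proof (intro conjI allI impI)
      show "x \<in> M" using x by simp
      fix e :: real assume "e > 0"
      then obtain N where N: "1 / real (Suc N) < e"
        by (metis nat_approx_posE)
      show "\<forall>\<^sub>F k in sequentially. xs (id k) (nk k) \<in> M \<and> d (xs (id k) (nk k)) x < e"
        unfolding eventually_sequentially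
      proof (intro exI allI impI)
        fix k assume "N \<le> k"
        then have "1 / real (Suc k) \<le> 1 / real (Suc N)"
          by (simp add: frac_le)
        moreover have "xs k (nk k) \<in> M" using h by simp
        ultimately show "xs (id k) (nk k) \<in> M \<and> d (xs (id k) (nk k)) x < e"
          using nk[of k] N by simp
      qed
    qed
    then show "\<exists>mk nk. inj mk \<and> limitin mtopology (\<lambda>k. xs (mk k) (nk k)) x sequentially"
      by (metis inj_on_id)
  qed
qed

lemma NS_metrizable:
  fixes X :: "'a topology" and f :: "nat \<Rightarrow> 'b \<Rightarrow> 'a \<Rightarrow> real" and J :: "nat \<Rightarrow> 'b set"
  assumes t1: "t1_space X"
    and cont: "\<And>p b. b \<in> J p \<Longrightarrow> continuous_map X euclideanreal (f p b)"
    and rng: "\<And>p b x. b \<in> J p \<Longrightarrow> x \<in> topspace X \<Longrightarrow> f p b x \<in> {0..1}"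
    and lf: "\<And>p y. y \<in> topspace X \<Longrightarrow> \<exists>W. openin X W \<and> y \<in> W \<and> finite {b \<in> J p. \<exists>z\<in>W. f p b z \<noteq> 0}"
    and sep: "\<And>U x. openin X U \<Longrightarrow> x \<in> U \<Longrightarrow>
               \<exists>p. \<exists>b\<in>J p. f p b x = 1 \<and> (\<forall>y\<in>topspace X. f p b y \<noteq> 0 \<longrightarrow> y \<in> U)"
  shows "metrizable_space X"
proof -
  define T where "T x y = insert 0 {\<bar>f p b x - f p b y\<bar> / real (Suc p) | p b. b \<in> J p}" for x y
  define d where "d x y = (if x \<in> topspace X \<and> y \<in> topspace X then Sup (T x y) else 0)" for x y
  have T_le: "t \<le> 1" if "x \<in> topspace X" "y \<in> topspace X" "t \<in> T x y" for x y t
  proof -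
    { fix p b assume b: "b \<in> J p"
      have "\<bar>f p b x - f p b y\<bar> \<le> 1" using rng[OF b that(1)] rng[OF b that(2)] by auto
      moreover have "1 \<le> real (Suc p)" by simp
      ultimately have "\<bar>f p b x - f p b y\<bar> / real (Suc p) \<le> 1"
        by (simp add: divide_le_eq_1) }
    then show ?thesis using that(3) unfolding T_def by auto
  qed
  have bdd: "bdd_above (T x y)" if "x \<in> topspace X" "y \<in> topspace X" for x y
    using T_le[OF that] by (meson bdd_above_def)
  have T_ne: "T x y \<noteq> {}" for x y by (simp add: T_def)
  have T_comm: "T x y = T y x" for x y
    unfolding T_def by (simp add: abs_minus_commute)
  have d_upper: "t \<le> d x y" if "x \<in> topspace X" "y \<in> topspace X" "t \<in> T x y" for x y t
    unfolding d_def using cSup_upper[OF that(3) bdd[OF that(1,2)]] that by simp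
  have term_le: "\<bar>f p b x - f p b y\<bar> / real (Suc p) \<le> d x y"
    if "x \<in> topspace X" "y \<in> topspace X" "b \<in> J p" for x y p b
    using d_upper[OF that(1,2)] that(3) unfolding T_def by blast
  have d_nonneg: "0 \<le> d x y" for x y
    using d_upper[of x y 0] by (auto simp: T_def d_def)
  have d_comm: "d x y = d y x" for x y
    unfolding d_def using T_comm by auto
  have d_least: "d x y \<le> c" if "x \<in> topspace X" "y \<in> topspace X" "0 \<le> c"
    "\<And>p b. b \<in> J p \<Longrightarrow> \<bar>f p b x - f p b y\<bar> / real (Suc p) \<le> c" for x y c
  proof -
    have "Sup (T x y) \<le> c"
      by (rule cSup_least[OF T_ne]) (use that in \<open>auto simp: T_def\<close>)
    then show ?thesis using that by (simp add: d_def)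
  qed
  have d_triangle: "d x z \<le> d x y + d y z" if "x \<in> topspace X" "y \<in> topspace X" "z \<in> topspace X" for x y z
  proof (rule d_least[OF that(1,3)])
    show "0 \<le> d x y + d y z" using d_nonneg by (simp add: add_nonneg_nonneg)
    fix p b assume b: "b \<in> J p"
    have "\<bar>f p b x - f p b z\<bar> / real (Suc p) \<le> \<bar>f p b x - f p b y\<bar> / real (Suc p) + \<bar>f p b y - f p b z\<bar> / real (Suc p)"
      by (simp add: add_divide_distrib[symmetric] divide_right_mono)
    also have "\<dots> \<le> d x y + d y z"
      using term_le[OF that(1,2) b] term_le[OF that(2,3) b] by linarith
    finally show "\<bar>f p b x - f p b z\<bar> / real (Suc p) \<le> d x y + d y z" .
  qed
  have d_zero: "d x y = 0 \<longleftrightarrow> x = y" if "x \<in> topspace X" "y \<in> topspace X" for x y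
  proof
    assume "x = y"
    then show "d x y = 0" using d_least[OF that, of 0] d_nonneg[of x y] by simp
  next
    assume d0: "d x y = 0"
    show "x = y"
    proof (rule ccontr)
      assume "x \<noteq> y"
      then have "openin X (topspace X - {y})" "x \<in> topspace X - {y}"
        using t1 that by (auto simp: t1_space_openin_delete_alt)
      then obtain p b where b: "b \<in> J p" "f p b x = 1" "\<forall>z\<in>topspace X. f p b z \<noteq> 0 \<longrightarrow> z \<in> topspace X - {y}"
        using sep by blast
      then have "f p b y = 0" using that by auto
      then have "1 / real (Suc p) \<le> d x y" using term_le[OF that b(1)] b(2) by simp
      moreover have "0 < 1 / real (Suc p)" by simp
      ultimately show False using d0 by simp
    qed
  qed
  interpret M: Metric_space "topspace X" d
    by unfold_locales (use d_nonneg d_comm d_zero d_triangle in auto)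
  have small: "\<exists>V. openin X V \<and> x \<in> V \<and> (\<forall>z\<in>V. z \<in> topspace X \<and> d x z < e)"
    if x: "x \<in> topspace X" and e: "e > 0" for x e
  proof -
    define e2 where "e2 = e / 2"
    have e2: "e2 > 0" "e2 < e" using e by (auto simp: e2_def)
    obtain P where P: "1 / real (Suc P) < e2" using e2(1) by (metis nat_approx_posE)
    obtain W where W: "\<And>p. openin X (W p)" "\<And>p. x \<in> W p"
       "\<And>p. finite {b \<in> J p. \<exists>z\<in>W p. f p b z \<noteq> 0}"
    proof -
      have "\<forall>p. \<exists>W. openin X W \<and> x \<in> W \<and> finite {b \<in> J p. \<exists>z\<in>W. f p b z \<noteq> 0}"
        using lf[OF x] by blast
      then have "\<exists>W. \<forall>p. openin X (W p) \<and> x \<in> W p \<and> finite {b \<in> J p. \<exists>z\<in>W p. f p b z \<noteq> 0}"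
        by (rule choice)
      then show ?thesis using that by blast
    qed
    define Fin where "Fin p = {b \<in> J p. \<exists>z\<in>W p. f p b z \<noteq> 0}" for p
    define Vb where "Vb p b = {z \<in> topspace X. f p b z \<in> ball (f p b x) e2}" for p b
    define \<F> where "\<F> = W ` {..<P} \<union> (\<Union>p<P. Vb p ` Fin p)"
    define V where "V = topspace X \<inter> \<Inter>\<F>"
    have finF: "finite \<F>" unfolding \<F>_def Fin_def using W(3) by auto
    have openF: "openin X S" if "S \<in> \<F>" for S
    proof -
      { fix p b assume "b \<in> Fin p"
        then have "b \<in> J p" by (simp add: Fin_def)
        then have "openin X (Vb p b)" unfolding Vb_def
          by (rule openin_continuous_map_preimage[OF cont]) (metis open_ball open_openin) }
      then show ?thesis using that W(1) unfolding \<F>_def by auto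
    qed
    have "openin X V" unfolding V_def by (rule openin_Int_Inter[OF finF openin_topspace openF])
    moreover have "x \<in> V"
      unfolding V_def \<F>_def Vb_def using x W(2) e2 by auto
    moreover have "z \<in> topspace X \<and> d x z < e" if z: "z \<in> V" for z
    proof -
      have zX: "z \<in> topspace X" using z by (simp add: V_def)
      have "d x z \<le> e2"
      proof (rule d_least[OF x zX])
        show "0 \<le> e2" using e2 by simp
        fix p b assume b: "b \<in> J p"
        show "\<bar>f p b x - f p b z\<bar> / real (Suc p) \<le> e2"
        proof (cases "p < P")
          case False
          have "\<bar>f p b x - f p b z\<bar> \<le> 1" using rng[OF b x] rng[OF b zX] by auto
          then have "\<bar>f p b x - f p b z\<bar> / real (Suc p) \<le> 1 / real (Suc p)"
            by (simp add: divide_right_mono)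
          also have "\<dots> \<le> 1 / real (Suc P)" using False by (simp add: frac_le)
          finally show ?thesis using P by simp
        next
          case True
          show ?thesis
          proof (cases "b \<in> Fin p")
            case True': True
            then have "z \<in> Vb p b" using z \<open>p < P\<close> unfolding V_def \<F>_def by auto
            then have "\<bar>f p b x - f p b z\<bar> < e2" unfolding Vb_def by (simp add: dist_real_def)
            moreover have "\<bar>f p b x - f p b z\<bar> / real (Suc p) \<le> \<bar>f p b x - f p b z\<bar>"
              by (simp add: divide_le_eq mult_le_cancel_left1)
            ultimately show ?thesis by simp
          next
            case False
            have "z \<in> W p" using z True unfolding V_def \<F>_def by auto
            then have "f p b z = 0" "f p b x = 0" using False b W(2)[of p] unfolding Fin_def by auto
            then show ?thesis using e2 by simp
          qed
        qed
      qed
      then show ?thesis using zX e2 by simp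
    qed
    ultimately show ?thesis by blast
  qed
  have "X = M.mtopology"
    unfolding topology_eq
  proof (intro allI iffI)
    fix U assume U: "openin X U"
    show "openin M.mtopology U"
      unfolding M.openin_mtopology
    proof (intro conjI allI impI)
      show "U \<subseteq> topspace X" using U by (simp add: openin_subset)
      fix x assume "x \<in> U"
      then obtain p b where b: "b \<in> J p" "f p b x = 1" "\<forall>z\<in>topspace X. f p b z \<noteq> 0 \<longrightarrow> z \<in> U"
        using sep U by blast
      have x: "x \<in> topspace X" using U \<open>x \<in> U\<close> openin_subset by blast
      show "\<exists>r>0. M.mball x r \<subseteq> U"
      proof (intro exI conjI)
        show "0 < 1 / real (Suc p)" by simp
        show "M.mball x (1 / real (Suc p)) \<subseteq> U"
        proof
          fix z assume "z \<in> M.mball x (1 / real (Suc p))"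
          then have z: "z \<in> topspace X" "d x z < 1 / real (Suc p)" by auto
          then have "\<bar>f p b x - f p b z\<bar> / real (Suc p) < 1 / real (Suc p)"
            using term_le[OF x z(1) b(1)] by linarith
          then have "\<bar>1 - f p b z\<bar> < 1" using b(2)
            by (simp add: divide_less_cancel)
          then have "f p b z \<noteq> 0" by auto
          then show "z \<in> U" using b(3) z by blast
        qed
      qed
    qed
  next
    fix U assume U: "openin M.mtopology U"
    show "openin X U"
      unfolding openin_subopen[of X U]
    proof
      fix x assume xU: "x \<in> U"
      then obtain r where r: "r > 0" "M.mball x r \<subseteq> U" and x: "x \<in> topspace X"
        using U unfolding M.openin_mtopology by blast
      obtain V where V: "openin X V" "x \<in> V" "\<forall>z\<in>V. z \<in> topspace X \<and> d x z < r"
        using small[OF x r(1)] by blast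
      have "V \<subseteq> U" using V r x by auto
      then show "\<exists>T. openin X T \<and> x \<in> T \<and> T \<subseteq> U" using V by blast
    qed
  qed
  then show ?thesis unfolding metrizable_space_def
    using M.Metric_space_axioms by blast
qed

lemma regular_closure_nbhd:
  assumes "regular_space X" "openin X W" "x \<in> W"
  shows "\<exists>U. openin X U \<and> x \<in> U \<and> X closure_of U \<subseteq> W"
proof -
  have "closedin X (topspace X - W)" "x \<in> topspace X - (topspace X - W)"
    using assms openin_subset by fastforce+
  then obtain U where "openin X U" "x \<in> U" "disjnt (topspace X - W) (X closure_of U)"
    using assms(1) unfolding regular_space by blast
  moreover have "X closure_of U \<subseteq> topspace X" by (simp add: closure_of_subset_topspace)
  ultimately show ?thesis by (auto simp: disjnt_iff)
qed

lemma normal_from_countable: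
  assumes H: "\<And>S T. closedin X S \<Longrightarrow> closedin X T \<Longrightarrow> disjnt S T \<Longrightarrow>
     \<exists>h::nat \<Rightarrow> 'a set. (\<forall>n. openin X (h n)) \<and> (\<forall>n. disjnt T (X closure_of (h n))) \<and> S \<subseteq> \<Union>(range h)"
  shows "normal_space X"
  unfolding normal_space_def
proof clarify
  fix S T
  assume clo: "closedin X S" "closedin X T" and "disjnt S T"
  obtain h :: "nat \<Rightarrow> 'a set" where 
      opeh: "\<And>n. openin X (h n)" and dish: "\<And>n. disjnt T (X closure_of (h n))"
      and Sh: "S \<subseteq> \<Union>(range h)"
    using H[OF clo \<open>disjnt S T\<close>] by blast
  obtain k :: "nat \<Rightarrow> 'a set" where 
      opek: "\<And>n. openin X (k n)" and disk: "\<And>n. disjnt S (X closure_of (k n))"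
      and Tk: "T \<subseteq> \<Union>(range k)"
  proof -
    have "disjnt T S" using \<open>disjnt S T\<close> by (simp add: disjnt_sym)
    then show ?thesis using H[OF clo(2,1)] that by blast
  qed
  define U where "U \<equiv> \<Union>i. h i - (\<Union>j<i. X closure_of k j)"
  define V where "V \<equiv> \<Union>i. k i - (\<Union>j\<le>i. X closure_of h j)"
  have hX: "h i \<subseteq> topspace X" "k i \<subseteq> topspace X" for i
    using opeh opek openin_subset by blast+
  show "\<exists>U V. openin X U \<and> openin X V \<and> S \<subseteq> U \<and> T \<subseteq> V \<and> disjnt U V"
  proof (intro exI conjI)
    have "openin X (h i - (\<Union>j<i. X closure_of k j))" for i
    proof -
      have "closedin X (\<Union>j<i. X closure_of k j)"
        by (rule closedin_Union[of "(\<lambda>j. X closure_of k j) ` {..<i}" X, simplified]) auto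
      then show ?thesis using opeh[of i] by (rule openin_diff[rotated])
    qed
    then show "openin X U" unfolding U_def by (intro openin_Union) blast
    have "openin X (k i - (\<Union>j\<le>i. X closure_of h j))" for i
    proof -
      have "closedin X (\<Union>j\<le>i. X closure_of h j)"
        by (rule closedin_Union[of "(\<lambda>j. X closure_of h j) ` {..i}" X, simplified]) auto
      then show ?thesis using opek[of i] by (rule openin_diff[rotated])
    qed
    then show "openin X V" unfolding V_def by (intro openin_Union) blast
    show "S \<subseteq> U"
    proof
      fix x assume "x \<in> S"
      then obtain i where "x \<in> h i" using Sh by blast
      moreover have "x \<notin> X closure_of k j" for j using disk[of j] \<open>x \<in> S\<close> by (auto simp: disjnt_iff)
      ultimately show "x \<in> U" unfolding U_def by blast
    qed
    show "T \<subseteq> V"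
    proof
      fix x assume "x \<in> T"
      then obtain i where "x \<in> k i" using Tk by blast
      moreover have "x \<notin> X closure_of h j" for j using dish[of j] \<open>x \<in> T\<close> by (auto simp: disjnt_iff)
      ultimately show "x \<in> V" unfolding V_def by blast
    qed
    show "disjnt U V"
      unfolding disjnt_def
    proof (rule equals0I)
      fix x assume "x \<in> U \<inter> V"
      then obtain i i' where a: "x \<in> h i" "\<forall>j<i. x \<notin> X closure_of k j"
        and b: "x \<in> k i'" "\<forall>j\<le>i'. x \<notin> X closure_of h j"
        unfolding U_def V_def by blast
      show False
      proof (cases "i \<le> i'")
        case True
        then show False using a(1) b(2) closure_of_subset[OF hX(1)] by blast
      next
        case False
        then have "i' < i" by simp
        then show False using b(1) a(2) closure_of_subset[OF hX(2)] by blast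
      qed
    qed
  qed
qed

lemma sigma_lf_base_metrizable:
  fixes X :: "'a topology" and B :: "nat \<Rightarrow> 'a set set"
  assumes reg: "regular_space X" and t1: "t1_space X"
    and opn: "\<And>k W. W \<in> B k \<Longrightarrow> openin X W"
    and lfB: "\<And>k. locally_finite_in X (B k)"
    and base: "\<And>U x. openin X U \<Longrightarrow> x \<in> U \<Longrightarrow> \<exists>k. \<exists>W\<in>B k. x \<in> W \<and> W \<subseteq> U"
  shows "metrizable_space X"
proof -
  have clU: "X closure_of \<Union>{W \<in> B n. P W} \<subseteq> \<Union>((\<lambda>W. X closure_of W) ` {W \<in> B n. P W})" for n P
  proof (rule closure_of_minimal)
    show "\<Union>{W \<in> B n. P W} \<subseteq> \<Union>((\<lambda>W. X closure_of W) ` {W \<in> B n. P W})"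
      using opn openin_subset closure_of_subset by fastforce
    have "locally_finite_in X ((\<lambda>W. X closure_of W) ` {W \<in> B n. P W})"
      by (rule locally_finite_in_closure[OF locally_finite_in_subset[OF lfB]]) auto
    then show "closedin X (\<Union>((\<lambda>W. X closure_of W) ` {W \<in> B n. P W}))"
      by (rule closedin_locally_finite_Union[rotated]) auto
  qed
  have normal: "normal_space X"
  proof (rule normal_from_countable)
    fix S T assume clo: "closedin X S" "closedin X T" and dj: "disjnt S T"
    define h where "h n = \<Union>{W \<in> B n. disjnt T (X closure_of W)}" for n
    show "\<exists>h::nat \<Rightarrow> 'a set. (\<forall>n. openin X (h n)) \<and> (\<forall>n. disjnt T (X closure_of (h n))) \<and> S \<subseteq> \<Union>(range h)"
    proof (intro exI conjI allI)
      fix n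
      show "openin X (h n)" unfolding h_def using opn by auto
      show "disjnt T (X closure_of (h n))"
        using clU[of n "\<lambda>W. disjnt T (X closure_of W)"] unfolding h_def disjnt_def by blast
    next
      show "S \<subseteq> \<Union>(range h)"
      proof
        fix x assume "x \<in> S"
        then have "closedin X T" "x \<in> topspace X - T"
          using clo dj closedin_subset by (auto simp: disjnt_iff)
        then obtain U where U: "openin X U" "x \<in> U" "disjnt T (X closure_of U)"
          using reg unfolding regular_space by blast
        obtain n W where W: "W \<in> B n" "x \<in> W" "W \<subseteq> U" using base[OF U(1,2)] by blast
        have "disjnt T (X closure_of W)"
          by (rule disjnt_subset2[OF U(3) closure_of_mono[OF W(3)]])
        then show "x \<in> \<Union>(range h)" using W unfolding h_def by blast
      qed
    qed
  qed
  define Z where "Z p W = \<Union>{X closure_of W' | W'. W' \<in> B (snd (prod_decode p)) \<and> X closure_of W' \<subseteq> W}" for p W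
  define J where "J p = B (fst (prod_decode p))" for p
  define good where "good p W f \<longleftrightarrow> continuous_map X (top_of_set {0..1::real}) f \<and>
        f ` (topspace X - W) \<subseteq> {0} \<and> f ` (Z p W) \<subseteq> {1}" for p W f
  define fn where "fn p W = (SOME f. good p W f)" for p W
  have goodfn: "good p W (fn p W)" if "W \<in> J p" for p W
  proof -
    have "closedin X (Z p W)"
    proof -
      have "locally_finite_in X ((\<lambda>W. X closure_of W) ` B (snd (prod_decode p)))"
        by (rule locally_finite_in_closure[OF lfB])
      then have "locally_finite_in X {X closure_of W' | W'. W' \<in> B (snd (prod_decode p)) \<and> X closure_of W' \<subseteq> W}"
        by (rule locally_finite_in_subset) auto
      then show ?thesis unfolding Z_def
        by (rule closedin_locally_finite_Union[rotated]) auto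
    qed
    moreover have "closedin X (topspace X - W)" using opn that J_def by auto
    moreover have "disjnt (topspace X - W) (Z p W)" unfolding Z_def disjnt_def by auto
    ultimately obtain f where "continuous_map X (top_of_set {0..1::real}) f"
       "f ` (topspace X - W) \<subseteq> {0}" "f ` (Z p W) \<subseteq> {1}"
      using Urysohn_lemma[OF normal, of "topspace X - W" "Z p W" 0 1] by auto
    then have "\<exists>f. good p W f" unfolding good_def by blast
    then show ?thesis unfolding fn_def by (rule someI_ex)
  qed
  show ?thesis
  proof (rule NS_metrizable[OF t1, of J fn])
    fix p b assume "b \<in> J p"
    then have "continuous_map X (top_of_set {0..1::real}) (fn p b)" using goodfn good_def by blast
    then show "continuous_map X euclideanreal (fn p b)"
      using continuous_map_in_subtopology by blast
  next
    fix p b x assume "b \<in> J p" "x \<in> topspace X"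
    then have "continuous_map X (top_of_set {0..1::real}) (fn p b)" using goodfn good_def by blast
    then show "fn p b x \<in> {0..1}"
      using \<open>x \<in> topspace X\<close> by (metis continuous_map_image_subset_topspace image_subset_iff topspace_euclidean_subtopology)
  next
    fix p y assume y: "y \<in> topspace X"
    obtain V where V: "openin X V" "y \<in> V" "finite {W \<in> B (fst (prod_decode p)). W \<inter> V \<noteq> {}}"
      using lfB[of "fst (prod_decode p)"] y unfolding locally_finite_in_def by blast
    have "{b \<in> J p. \<exists>z\<in>V. fn p b z \<noteq> 0} \<subseteq> {W \<in> B (fst (prod_decode p)). W \<inter> V \<noteq> {}}"
    proof clarify
      fix b z assume b: "b \<in> J p" "z \<in> V" "fn p b z \<noteq> 0"
      have "z \<in> topspace X" using V(1) b(2) openin_subset by blast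
      then have "z \<in> b" using goodfn[OF b(1)] b(3) unfolding good_def by auto
      then show "b \<in> B (fst (prod_decode p)) \<and> b \<inter> V \<noteq> {}" using b J_def by auto
    qed
    then show "\<exists>W. openin X W \<and> y \<in> W \<and> finite {b \<in> J p. \<exists>z\<in>W. fn p b z \<noteq> 0}"
      using V finite_subset by blast
  next
    fix U x assume U: "openin X U" "x \<in> U"
    obtain k W where W: "W \<in> B k" "x \<in> W" "W \<subseteq> U" using base[OF U] by blast
    obtain U' where U': "openin X U'" "x \<in> U'" "X closure_of U' \<subseteq> W"
      using regular_closure_nbhd[OF reg opn[OF W(1)] W(2)] by blast
    obtain j W' where W': "W' \<in> B j" "x \<in> W'" "W' \<subseteq> U'" using base[OF U'(1,2)] by blast
    define p where "p = prod_encode (k, j)"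
    have pd: "prod_decode p = (k, j)" by (simp add: p_def)
    have WJ: "W \<in> J p" using W(1) pd J_def by simp
    have clW: "X closure_of W' \<subseteq> W" using closure_of_mono[OF W'(3)] U'(3) by blast
    have "W' \<subseteq> topspace X" using opn[OF W'(1)] openin_subset by blast
    then have "x \<in> X closure_of W'" using closure_of_subset W'(2) by blast
    then have "x \<in> Z p W" unfolding Z_def pd snd_conv using W'(1) clW by blast
    then have "fn p W x = 1" using goodfn[OF WJ] unfolding good_def by auto
    moreover have "\<forall>y\<in>topspace X. fn p W y \<noteq> 0 \<longrightarrow> y \<in> U"
      using goodfn[OF WJ] W(3) unfolding good_def by auto
    ultimately show "\<exists>p. \<exists>b\<in>J p. fn p b x = 1 \<and> (\<forall>y\<in>topspace X. fn p b y \<noteq> 0 \<longrightarrow> y \<in> U)"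
      using WJ by blast
  qed
qed

lemma finite_in_mono_family:
  fixes A :: "nat \<Rightarrow> 'b set"
  assumes "finite G" "G \<subseteq> \<Union>(range A)" "\<And>i j. i \<le> j \<Longrightarrow> A i \<subseteq> A j"
  shows "\<exists>m. G \<subseteq> A m"
  using assms(1,2)
proof (induction G rule: finite_induct)
  case empty then show ?case by blast
next
  case (insert M G)
  then obtain m i where "G \<subseteq> A m" "M \<in> A i" by blast
  then have "insert M G \<subseteq> A (max i m)" using assms(3)[of i "max i m"] assms(3)[of m "max i m"] by auto
  then show ?case by blast
qed

lemma keyL:
  fixes X :: "'a topology" and A :: "nat \<Rightarrow> 'a set set"
  assumes knet: "k_network X (\<Union>(range A))"
    and monoA: "\<And>i j. i \<le> j \<Longrightarrow> A i \<subseteq> A j"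
    and fu: "frechet_urysohn X" and a4: "alpha4 X"
    and U: "openin X U" "x \<in> U"
  shows "\<exists>k. x \<in> X interior_of \<Union>{M \<in> A k. x \<in> X closure_of M \<and> M \<subseteq> U}"
proof (rule ccontr)
  define F where "F k = \<Union>{M \<in> A k. x \<in> X closure_of M \<and> M \<subseteq> U}" for k
  assume "\<not> ?thesis"
  then have nk: "\<And>k. x \<notin> X interior_of F k" unfolding F_def by blast
  have x: "x \<in> topspace X" using U openin_subset by blast
  have NX: "N \<subseteq> topspace X" if "N \<in> \<Union>(range A)" for N
    using knet that unfolding k_network_def by blast
  have "\<exists>s. range s \<subseteq> topspace X - F k \<and> limitin X s x sequentially" for k
  proof -
    have "x \<in> X closure_of (topspace X - F k)"
      using nk[of k] x unfolding interior_of_closure_of by blast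
    then show ?thesis using fu unfolding frechet_urysohn_def by blast
  qed
  then obtain xs where xs: "\<And>k. range (xs k) \<subseteq> topspace X - F k" "\<And>k. limitin X (xs k) x sequentially"
    by metis
  obtain mk nk where mk: "inj mk" and lim: "limitin X (\<lambda>k. xs (mk k) (nk k)) x sequentially"
    using a4 x xs unfolding alpha4_def alpha4_at_def by blast
  define y where "y k = xs (mk k) (nk k)" for k
  have "\<forall>\<^sub>F j in sequentially. y j \<in> U" using lim U unfolding limitin_def y_def by blast
  then obtain N0 where N0: "\<And>j. j \<ge> N0 \<Longrightarrow> y j \<in> U" unfolding eventually_sequentially by blast
  define z where "z j = y (j + N0)" for j
  have limz: "limitin X z x sequentially"
    unfolding z_def y_def by (rule limitin_sequentially_offset[OF lim])
  have zX: "range z \<subseteq> topspace X" using xs unfolding z_def y_def by blast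
  have zF: "z j \<notin> F (mk (j + N0))" for j using xs unfolding z_def y_def by blast
  have "compactin X (insert x (range z))"
    by (rule compactin_sequence_with_limit[OF limz subset_refl zX])
  moreover have "insert x (range z) \<subseteq> U" using U N0 unfolding z_def by auto
  ultimately obtain G where G: "finite G" "G \<subseteq> \<Union>(range A)" "insert x (range z) \<subseteq> \<Union>G" "\<Union>G \<subseteq> U"
    using knet U(1) unfolding k_network_def by metis
  obtain m where m: "G \<subseteq> A m" using finite_in_mono_family[OF G(1,2) monoA] by blast
  define G' where "G' = {M \<in> G. x \<notin> X closure_of M}"
  have ev1: "\<forall>\<^sub>F j in sequentially. \<forall>M\<in>G'. z j \<notin> M"
  proof (rule eventually_ball_finite)
    show "finite G'" using G(1) G'_def by simp
    show "\<forall>M\<in>G'. \<forall>\<^sub>F j in sequentially. z j \<notin> M"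
    proof
      fix M assume M: "M \<in> G'"
      then have MX: "M \<subseteq> topspace X" using NX G(2) G'_def by blast
      have "openin X (topspace X - X closure_of M)" "x \<in> topspace X - X closure_of M"
        using M x G'_def by auto
      then have "\<forall>\<^sub>F j in sequentially. z j \<in> topspace X - X closure_of M"
        using limz unfolding limitin_def by blast
      then show "\<forall>\<^sub>F j in sequentially. z j \<notin> M"
        by (rule eventually_mono) (use closure_of_subset[OF MX] in auto)
    qed
  qed
  have "finite (mk -` {..<m})" by (rule finite_vimageI[OF _ mk]) simp
  then obtain Bd where Bd0: "mk -` {..<m} \<subseteq> {..<Bd}"
    by (meson finite_nat_bounded)
  have Bd: "i < Bd" if "i \<in> mk -` {..<m}" for i using Bd0 that by blast
  have ev2: "\<forall>\<^sub>F j in sequentially. m \<le> mk (j + N0)"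
    unfolding eventually_sequentially
  proof (intro exI allI impI)
    fix j assume "Bd \<le> j"
    show "m \<le> mk (j + N0)"
    proof (rule ccontr)
      assume "\<not> m \<le> mk (j + N0)"
      then have "j + N0 \<in> mk -` {..<m}" by simp
      then have "j + N0 < Bd" by (rule Bd)
      then show False using \<open>Bd \<le> j\<close> by linarith
    qed
  qed
  obtain j where j1: "\<forall>M\<in>G'. z j \<notin> M" and j2: "m \<le> mk (j + N0)"
    using eventually_happens'[OF sequentially_bot eventually_conj[OF ev1 ev2]] by blast
  obtain M where M: "M \<in> G" "z j \<in> M" using G(3) by blast
  then have "x \<in> X closure_of M" using j1 G'_def by blast
  moreover have "M \<in> A (mk (j + N0))" using M(1) m monoA[OF j2] by blast
  moreover have "M \<subseteq> U" using M(1) G(4) by blast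
  ultimately have "z j \<in> F (mk (j + N0))" unfolding F_def using M(2) by blast
  then show False using zF by blast
qed

lemma locally_finite_in_Un:
  assumes "locally_finite_in X A" "locally_finite_in X B"
  shows "locally_finite_in X (A \<union> B)"
  unfolding locally_finite_in_def
proof (intro conjI ballI)
  show "\<Union>(A \<union> B) \<subseteq> topspace X" using assms unfolding locally_finite_in_def by auto
  fix x assume x: "x \<in> topspace X"
  obtain V where V: "openin X V" "x \<in> V" "finite {U \<in> A. U \<inter> V \<noteq> {}}"
    using assms(1) x unfolding locally_finite_in_def by blast
  obtain W where W: "openin X W" "x \<in> W" "finite {U \<in> B. U \<inter> W \<noteq> {}}"
    using assms(2) x unfolding locally_finite_in_def by blast
  have "{U \<in> A \<union> B. U \<inter> (V \<inter> W) \<noteq> {}} \<subseteq> {U \<in> A. U \<inter> V \<noteq> {}} \<union> {U \<in> B. U \<inter> W \<noteq> {}}"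
    by blast
  then have "finite {U \<in> A \<union> B. U \<inter> (V \<inter> W) \<noteq> {}}"
    using V(3) W(3) finite_subset by blast
  then show "\<exists>V. openin X V \<and> x \<in> V \<and> finite {U \<in> A \<union> B. U \<inter> V \<noteq> {}}"
    using V W by blast
qed

lemma locally_finite_in_UN_atMost:
  fixes A :: "nat \<Rightarrow> 'a set set"
  assumes "\<And>i. locally_finite_in X (A i)"
  shows "locally_finite_in X (\<Union>i\<le>k. A i)"
proof (induction k)
  case 0
  then show ?case using assms by simp
next
  case (Suc k)
  have "(\<Union>i\<le>Suc k. A i) = (\<Union>i\<le>k. A i) \<union> A (Suc k)" by (auto simp: atMost_Suc)
  then show ?case using locally_finite_in_Un[OF Suc assms] by simp
qed

lemma locally_finite_in_closure_points:
  assumes "locally_finite_in X A" "x \<in> topspace X"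
  shows "finite {M \<in> A. x \<in> X closure_of M}"
proof -
  obtain V where V: "openin X V" "x \<in> V" "finite {U \<in> A. U \<inter> V \<noteq> {}}"
    using assms unfolding locally_finite_in_def by blast
  have "{M \<in> A. x \<in> X closure_of M} \<subseteq> {U \<in> A. U \<inter> V \<noteq> {}}"
    using V(1,2) by (auto simp: in_closure_of)
  then show ?thesis using V(3) finite_subset by blast
qed

lemma lf_refinement:
  fixes X :: "'a topology" and A :: "nat \<Rightarrow> 'a set set"
  assumes knet: "k_network X (\<Union>(range A))"
    and lfA: "\<And>k. locally_finite_in X (A k)"
    and monoA: "\<And>i j. i \<le> j \<Longrightarrow> A i \<subseteq> A j"
    and fu: "frechet_urysohn X" and a4: "alpha4 X"
    and Pdown: "\<And>W Q. P W \<Longrightarrow> Q \<subseteq> W \<Longrightarrow> P Q"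
    and Pcov: "\<And>x. x \<in> topspace X \<Longrightarrow> \<exists>W. openin X W \<and> x \<in> W \<and> P W"
  shows "\<exists>\<Q>. locally_finite_in X \<Q> \<and> \<Union>\<Q> = topspace X \<and> (\<forall>Q\<in>\<Q>. P Q)"
proof -
  define PA where "PA k = {M \<in> A k. P M}" for k
  define E where "E k = \<Union>(PA k)" for k
  define D where "D k = (\<Union>i<k. E i)" for k
  define \<Q> where "\<Q> = (\<Union>k. (\<lambda>M. M - X interior_of D k) ` PA k)"
  have NX: "N \<subseteq> topspace X" if "N \<in> A k" for N k
    using knet that unfolding k_network_def by blast
  have Hcov: "\<exists>k. x \<in> X interior_of E k" if x: "x \<in> topspace X" for x
  proof -
    obtain W where W: "openin X W" "x \<in> W" "P W" using Pcov[OF x] by blast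
    obtain k where k: "x \<in> X interior_of \<Union>{M \<in> A k. x \<in> X closure_of M \<and> M \<subseteq> W}"
      using keyL[OF knet monoA fu a4 W(1,2)] by blast
    have "\<Union>{M \<in> A k. x \<in> X closure_of M \<and> M \<subseteq> W} \<subseteq> E k"
      unfolding E_def PA_def using Pdown W(3) by blast
    from interior_of_mono[OF this] show ?thesis using k by blast
  qed
  have cover: "\<Union>\<Q> = topspace X"
  proof
    show "\<Union>\<Q> \<subseteq> topspace X"
    proof (rule Union_least)
      fix Q assume "Q \<in> \<Q>"
      then obtain k M where "M \<in> PA k" "Q = M - X interior_of D k" unfolding \<Q>_def by blast
      then show "Q \<subseteq> topspace X" using NX unfolding PA_def by blast
    qed
    show "topspace X \<subseteq> \<Union>\<Q>"
    proof
      fix x assume x: "x \<in> topspace X"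
      obtain k1 where "x \<in> X interior_of E k1" using Hcov[OF x] by blast
      then have "x \<in> E k1" by (rule subsetD[OF interior_of_subset])
      then have ex: "\<exists>k. x \<in> E k" by blast
      define k0 where "k0 = (LEAST k. x \<in> E k)"
      have k0: "x \<in> E k0" unfolding k0_def using ex by (rule LeastI_ex)
      have nE: "x \<notin> E i" if "i < k0" for i using not_less_Least[OF that[unfolded k0_def]] .
      have "x \<notin> D k0" unfolding D_def using nE by blast
      then have xD: "x \<notin> X interior_of D k0" using subsetD[OF interior_of_subset] by metis
      obtain M where M: "M \<in> PA k0" "x \<in> M" using k0 unfolding E_def by blast
      have "M - X interior_of D k0 \<in> \<Q>" unfolding \<Q>_def using M(1) by blast
      moreover have "x \<in> M - X interior_of D k0" using M(2) xD by blast
      ultimately show "x \<in> \<Union>\<Q>" by blast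
    qed
  qed
  have goodQ: "\<forall>Q\<in>\<Q>. P Q" unfolding \<Q>_def PA_def using Pdown by blast
  have lfQ: "locally_finite_in X \<Q>"
    unfolding locally_finite_in_def
  proof (intro conjI ballI)
    show "\<Union>\<Q> \<subseteq> topspace X" using cover by simp
    fix y assume y: "y \<in> topspace X"
    obtain j where j: "y \<in> X interior_of E j" using Hcov[OF y] by blast
    obtain V where V: "openin X V" "y \<in> V" "finite {U \<in> A j. U \<inter> V \<noteq> {}}"
      using lfA[of j] y unfolding locally_finite_in_def by blast
    define V' where "V' = V \<inter> X interior_of E j"
    have "{Q \<in> \<Q>. Q \<inter> V' \<noteq> {}} \<subseteq> (\<Union>k\<le>j. (\<lambda>M. M - X interior_of D k) ` {U \<in> A j. U \<inter> V \<noteq> {}})"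
    proof
      fix Q assume Q: "Q \<in> {Q \<in> \<Q>. Q \<inter> V' \<noteq> {}}"
      then obtain k M where kM: "M \<in> PA k" "Q = M - X interior_of D k" unfolding \<Q>_def by blast
      have "k \<le> j"
      proof (rule ccontr)
        assume "\<not> k \<le> j"
        then have "j < k" by simp
        then have "E j \<subseteq> D k" unfolding D_def by blast
        then have "X interior_of E j \<subseteq> X interior_of D k" by (rule interior_of_mono)
        then have "Q \<inter> V' = {}" using kM(2) V'_def by blast
        then show False using Q by blast
      qed
      moreover have "M \<in> A j" using kM(1) monoA[OF \<open>k \<le> j\<close>] PA_def by blast
      moreover have "M \<inter> V \<noteq> {}" using Q kM(2) V'_def by blast
      ultimately show "Q \<in> (\<Union>k\<le>j. (\<lambda>M. M - X interior_of D k) ` {U \<in> A j. U \<inter> V \<noteq> {}})"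
        using kM(2) by blast
    qed
    moreover have "finite (\<Union>k\<le>j. (\<lambda>M. M - X interior_of D k) ` {U \<in> A j. U \<inter> V \<noteq> {}})"
      using V(3) by blast
    ultimately have "finite {Q \<in> \<Q>. Q \<inter> V' \<noteq> {}}" using finite_subset by blast
    moreover have "openin X V'" unfolding V'_def using V(1) openin_interior_of by (rule openin_Int)
    moreover have "y \<in> V'" unfolding V'_def using V(2) j by blast
    ultimately show "\<exists>V. openin X V \<and> y \<in> V \<and> finite {U \<in> \<Q>. U \<inter> V \<noteq> {}}" by blast
  qed
  show ?thesis using lfQ cover goodQ by blast
qed

lemma lf_expansion:
  fixes X :: "'a topology" and A :: "nat \<Rightarrow> 'a set set" and C :: "'a set set"
  assumes knet: "k_network X (\<Union>(range A))"
    and lfA: "\<And>k. locally_finite_in X (A k)"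
    and monoA: "\<And>i j. i \<le> j \<Longrightarrow> A i \<subseteq> A j"
    and fu: "frechet_urysohn X" and a4: "alpha4 X" and reg: "regular_space X"
    and lfC: "locally_finite_in X C"
  shows "\<exists>S. (\<forall>M\<in>C. openin X (S M) \<and> X closure_of M \<subseteq> S M) \<and>
             (\<forall>y\<in>topspace X. \<exists>V. openin X V \<and> y \<in> V \<and> finite {M \<in> C. S M \<inter> V \<noteq> {}})"
proof -
  define P where "P Q \<longleftrightarrow> finite {M \<in> C. X closure_of Q \<inter> X closure_of M \<noteq> {}}" for Q
  have Pdown: "P Q" if "P W" "Q \<subseteq> W" for W Q
  proof -
    have "{M \<in> C. X closure_of Q \<inter> X closure_of M \<noteq> {}} \<subseteq> {M \<in> C. X closure_of W \<inter> X closure_of M \<noteq> {}}"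
      using closure_of_mono[OF that(2)] by blast
    then show ?thesis using that(1) unfolding P_def using finite_subset by blast
  qed
  have Pcov: "\<exists>W. openin X W \<and> y \<in> W \<and> P W" if y: "y \<in> topspace X" for y
  proof -
    obtain O' where O: "openin X O'" "y \<in> O'" "finite {M \<in> C. M \<inter> O' \<noteq> {}}"
      using lfC y unfolding locally_finite_in_def by blast
    obtain W where W: "openin X W" "y \<in> W" "X closure_of W \<subseteq> O'"
      using regular_closure_nbhd[OF reg O(1,2)] by blast
    have "{M \<in> C. X closure_of W \<inter> X closure_of M \<noteq> {}} \<subseteq> {M \<in> C. M \<inter> O' \<noteq> {}}"
    proof
      fix M assume "M \<in> {M \<in> C. X closure_of W \<inter> X closure_of M \<noteq> {}}"
      then obtain z where M: "M \<in> C" "z \<in> X closure_of W" "z \<in> X closure_of M" by blast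
      then have "z \<in> O'" using W(3) by blast
      then have "M \<inter> O' \<noteq> {}" using M(3) O(1) by (auto simp: in_closure_of)
      then show "M \<in> {M \<in> C. M \<inter> O' \<noteq> {}}" using M(1) by blast
    qed
    then have "P W" unfolding P_def using O(3) finite_subset by blast
    then show ?thesis using W by blast
  qed
  obtain \<Q> where Q: "locally_finite_in X \<Q>" "\<Union>\<Q> = topspace X" "\<forall>Q\<in>\<Q>. P Q"
    using lf_refinement[OF knet lfA monoA fu a4, of P] Pdown Pcov by blast
  define S where "S M = topspace X - \<Union>{X closure_of Q | Q. Q \<in> \<Q> \<and> X closure_of Q \<inter> X closure_of M = {}}" for M
  have "openin X (S M)" for M
  proof -
    have "locally_finite_in X ((\<lambda>Q. X closure_of Q) ` \<Q>)"
      by (rule locally_finite_in_closure[OF Q(1)])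
    then have "locally_finite_in X {X closure_of Q | Q. Q \<in> \<Q> \<and> X closure_of Q \<inter> X closure_of M = {}}"
      by (rule locally_finite_in_subset) auto
    then have "closedin X (\<Union>{X closure_of Q | Q. Q \<in> \<Q> \<and> X closure_of Q \<inter> X closure_of M = {}})"
      by (rule closedin_locally_finite_Union[rotated]) auto
    then show ?thesis unfolding S_def by blast
  qed
  moreover have "X closure_of M \<subseteq> S M" for M
  proof
    fix z assume z: "z \<in> X closure_of M"
    then have "z \<in> topspace X" by (rule subsetD[OF closure_of_subset_topspace])
    moreover have "z \<notin> \<Union>{X closure_of Q | Q. Q \<in> \<Q> \<and> X closure_of Q \<inter> X closure_of M = {}}"
      using z by auto
    ultimately show "z \<in> S M" unfolding S_def by (rule DiffI)
  qed
  moreover have "\<exists>V. openin X V \<and> y \<in> V \<and> finite {M \<in> C. S M \<inter> V \<noteq> {}}" if y: "y \<in> topspace X" for y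
  proof -
    obtain V where V: "openin X V" "y \<in> V" "finite {Q \<in> \<Q>. Q \<inter> V \<noteq> {}}"
      using Q(1) y unfolding locally_finite_in_def by blast
    have "{M \<in> C. S M \<inter> V \<noteq> {}} \<subseteq> (\<Union>Q\<in>{Q \<in> \<Q>. Q \<inter> V \<noteq> {}}. {M \<in> C. X closure_of Q \<inter> X closure_of M \<noteq> {}})"
    proof
      fix M assume "M \<in> {M \<in> C. S M \<inter> V \<noteq> {}}"
      then obtain z where M: "M \<in> C" "z \<in> S M" "z \<in> V" by blast
      then have zX: "z \<in> topspace X" unfolding S_def by blast
      then obtain Q where Qz: "Q \<in> \<Q>" "z \<in> Q" using Q(2) by blast
      have QX: "Q \<subseteq> topspace X" using Qz(1) Q(2) by blast
      have "z \<in> X closure_of Q" using closure_of_subset[OF QX] Qz(2) by blast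
      then have "X closure_of Q \<inter> X closure_of M \<noteq> {}" using M(2) Qz(1) unfolding S_def by blast
      then show "M \<in> (\<Union>Q\<in>{Q \<in> \<Q>. Q \<inter> V \<noteq> {}}. {M \<in> C. X closure_of Q \<inter> X closure_of M \<noteq> {}})"
        using M Qz by blast
    qed
    moreover have "finite (\<Union>Q\<in>{Q \<in> \<Q>. Q \<inter> V \<noteq> {}}. {M \<in> C. X closure_of Q \<inter> X closure_of M \<noteq> {}})"
      using V(3) Q(3) unfolding P_def by blast
    ultimately show ?thesis using V(1,2) finite_subset by blast
  qed
  ultimately show ?thesis by blast
qed

lemma aleph_frechet_alpha4_metrizable:
  fixes X :: "'a topology"
  assumes al: "aleph_space X" and fu: "frechet_urysohn X" and a4: "alpha4 X"
  shows "metrizable_space X"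
proof -
  have reg: "regular_space X" and t1: "t1_space X" using al unfolding aleph_space_def by blast+
  obtain N where N: "k_network X N" "sigma_locally_finite X N" using al unfolding aleph_space_def by blast
  obtain A0 :: "nat \<Rightarrow> 'a set set" where A0: "N = (\<Union>n. A0 n)" "\<And>n. locally_finite_in X (A0 n)"
    using N(2) unfolding sigma_locally_finite_def by blast
  define A where "A k = (\<Union>i\<le>k. A0 i)" for k
  have lfA: "\<And>k. locally_finite_in X (A k)" unfolding A_def by (rule locally_finite_in_UN_atMost[OF A0(2)])
  have monoA: "\<And>i j. i \<le> j \<Longrightarrow> A i \<subseteq> A j" unfolding A_def by (meson UN_mono atMost_iff order.trans order_refl subsetI)
  have "\<Union>(range A) = N" unfolding A_def A0(1) by auto
  then have knet: "k_network X (\<Union>(range A))" using N(1) by simp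
  have "\<exists>S. (\<forall>M\<in>A k. openin X (S M) \<and> X closure_of M \<subseteq> S M) \<and>
             (\<forall>y\<in>topspace X. \<exists>V. openin X V \<and> y \<in> V \<and> finite {M \<in> A k. S M \<inter> V \<noteq> {}})" for k
    by (rule lf_expansion[OF knet lfA monoA fu a4 reg lfA])
  then have "\<forall>k. \<exists>S. (\<forall>M\<in>A k. openin X (S M) \<and> X closure_of M \<subseteq> S M) \<and>
             (\<forall>y\<in>topspace X. \<exists>V. openin X V \<and> y \<in> V \<and> finite {M \<in> A k. S M \<inter> V \<noteq> {}})"
    by blast
  then have "\<exists>S. \<forall>k. (\<forall>M\<in>A k. openin X (S k M) \<and> X closure_of M \<subseteq> S k M) \<and>
             (\<forall>y\<in>topspace X. \<exists>V. openin X V \<and> y \<in> V \<and> finite {M \<in> A k. S k M \<inter> V \<noteq> {}})"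
    by (rule choice)
  then obtain S where S0: "\<forall>k. (\<forall>M\<in>A k. openin X (S k M) \<and> X closure_of M \<subseteq> S k M) \<and>
             (\<forall>y\<in>topspace X. \<exists>V. openin X V \<and> y \<in> V \<and> finite {M \<in> A k. S k M \<inter> V \<noteq> {}})"
    by blast
  have S: "\<And>k M. M \<in> A k \<Longrightarrow> openin X (S k M)" "\<And>k M. M \<in> A k \<Longrightarrow> X closure_of M \<subseteq> S k M"
    "\<And>k y. y \<in> topspace X \<Longrightarrow> \<exists>V. openin X V \<and> y \<in> V \<and> finite {M \<in> A k. S k M \<inter> V \<noteq> {}}"
    using S0 by blast+
  define bs where "bs k F = X interior_of \<Union>F \<inter> \<Inter>(S k ` F)" for k F
  define B where "B k = {bs k F | F. finite F \<and> F \<subseteq> A k}" for k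
  show ?thesis
  proof (rule sigma_lf_base_metrizable[OF reg t1, of B])
    fix k W assume "W \<in> B k"
    then obtain F where F: "W = bs k F" "finite F" "F \<subseteq> A k" unfolding B_def by blast
    show "openin X W"
    proof (cases "F = {}")
      case True then show ?thesis using F by (simp add: bs_def)
    next
      case False
      have "openin X (\<Inter>(S k ` F))" using False F(2,3) S(1) by (intro openin_Inter) auto
      then have "openin X (X interior_of \<Union>F \<inter> \<Inter>(S k ` F))"
        using openin_interior_of by (rule openin_Int[rotated])
      then show ?thesis using F(1) unfolding bs_def by simp
    qed
  next
    fix k
    show "locally_finite_in X (B k)"
      unfolding locally_finite_in_def
    proof (intro conjI ballI)
      show "\<Union>(B k) \<subseteq> topspace X"
      proof (rule Union_least)
        fix W assume "W \<in> B k"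
        then obtain F where "W = bs k F" unfolding B_def by blast
        then show "W \<subseteq> topspace X" unfolding bs_def using interior_of_subset_topspace[of X "\<Union>F"] by blast
      qed
      fix y assume y: "y \<in> topspace X"
      obtain V where V: "openin X V" "y \<in> V" "finite {M \<in> A k. S k M \<inter> V \<noteq> {}}"
        using S(3)[OF y] by blast
      have "{W \<in> B k. W \<inter> V \<noteq> {}} \<subseteq> bs k ` Pow {M \<in> A k. S k M \<inter> V \<noteq> {}}"
      proof
        fix W assume "W \<in> {W \<in> B k. W \<inter> V \<noteq> {}}"
        then obtain F where F: "W = bs k F" "F \<subseteq> A k" "W \<inter> V \<noteq> {}" unfolding B_def by blast
        have "F \<subseteq> {M \<in> A k. S k M \<inter> V \<noteq> {}}" using F unfolding bs_def by blast
        then show "W \<in> bs k ` Pow {M \<in> A k. S k M \<inter> V \<noteq> {}}" using F(1) by blast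
      qed
      then have "finite {W \<in> B k. W \<inter> V \<noteq> {}}" using V(3) finite_subset by blast
      then show "\<exists>V. openin X V \<and> y \<in> V \<and> finite {U \<in> B k. U \<inter> V \<noteq> {}}" using V by blast
    qed
  next
    fix U x assume U: "openin X U" "x \<in> U"
    obtain k where k: "x \<in> X interior_of \<Union>{M \<in> A k. x \<in> X closure_of M \<and> M \<subseteq> U}"
      using keyL[OF knet monoA fu a4 U] by blast
    define F where "F = {M \<in> A k. x \<in> X closure_of M \<and> M \<subseteq> U}"
    have x: "x \<in> topspace X" using U openin_subset by blast
    have "finite F" unfolding F_def
      using locally_finite_in_closure_points[OF lfA x] by (rule finite_subset[rotated]) auto
    moreover have "F \<subseteq> A k" unfolding F_def by blast
    ultimately have "bs k F \<in> B k" unfolding B_def by blast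
    moreover have "x \<in> bs k F"
    proof -
      have "x \<in> S k M" if "M \<in> F" for M
        using that S(2)[of M k] unfolding F_def by blast
      then show ?thesis unfolding bs_def using k unfolding F_def by blast
    qed
    moreover have "bs k F \<subseteq> U"
    proof -
      have "bs k F \<subseteq> \<Union>F" unfolding bs_def using interior_of_subset[of X "\<Union>F"] by blast
      moreover have "\<Union>F \<subseteq> U" unfolding F_def by blast
      ultimately show ?thesis by (rule order.trans)
    qed
    ultimately show "\<exists>k. \<exists>W\<in>B k. x \<in> W \<and> W \<subseteq> U" by blast
  qed
qed

theorem theorem2p2:
  fixes X :: "'a topology"
  assumes "aleph_space X"
  shows "metrizable_space X \<longleftrightarrow> frechet_urysohn X \<and> alpha4 X"
  using aleph_frechet_alpha4_metrizable[OF assms] metrizable_frechet metrizable_alpha4 by blast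

end
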